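(* Let $L$ be a finite lattice and let $\phi:\ \hat 0=x_0<x_1<\dots<x_k=\hat 1$ be a chain of $L$ containing its minimum $\hat 0$ and maximum $\hat 1$. Let $\gamma_1,\gamma_1',\gamma_2,\gamma_2'$ be the four edge-labellings of $L$ associated to $\phi$ (defined in the context). Then, as functions on the set of cover relations of $L$ with values in the integers, $\gamma_2=\gamma_2'\le\gamma_1=\gamma_1'$ (pointwise). Moreover, $\gamma_1'=\gamma_2'$ if and only if $x_i$ is a left modular element of $L$ for every $i\in\{0,\dots,k\}$.
   Context: All lattices are finite. A join-irreducible element $j$ covers exactly one element; a meet-irreducible element $m$ is covered by exactly one element. For a join-irreducible $j$ set $\delta(j):=\min\{i\mid j\le x_i\}$; for a meet-irreducible $m$ set $\beta(m):=\max\{i\in\{1,\dots,k\}\mid m\ge x_{i-1}\}$. For a cover relation $b\lessdot c$ of $L$ define $\gamma_1(b\lessdot c):=\min\{\delta(j)\mid j \text{ join-irreducible},\ j\le c,\ j\not\le b\}$, $\gamma_1'(b\lessdot c):=\max\{i\in\{1,\dots,k\}\mid c\wedge x_{i-1}\le b\}$, $\gamma_2(b\lessdot c):=\max\{\beta(m)\mid m \text{ meet-irreducible},\ m\ge b,\ m\not\ge c\}$, $\gamma_2'(b\lessdot c):=\min\{i\in\{0,\dots,k\}\mid b\vee x_i\ge c\}$. An element $a\in L$ is left modular if for all $b<c$ in $L$ one has $(b\vee a)\wedge c=b\vee(a\wedge c)$. *)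

theory Defs
  imports Main
begin

definition covers :: "'a::order \<Rightarrow> 'a \<Rightarrow> bool" where
  "covers b c \<longleftrightarrow> b < c \<and> \<not> (\<exists>z. b < z \<and> z < c)"

definition join_irr :: "'a::order \<Rightarrow> bool" where
  "join_irr j \<longleftrightarrow> (\<exists>!b. covers b j)"

definition meet_irr :: "'a::order \<Rightarrow> bool" where
  "meet_irr m \<longleftrightarrow> (\<exists>!c. covers m c)"

text \<open>The chain is x 0 < x 1 < ... < x k.\<close>
definition delta :: "(nat \<Rightarrow> 'a::order) \<Rightarrow> nat \<Rightarrow> 'a \<Rightarrow> nat" where
  "delta x k j = Min {i. i \<le> k \<and> j \<le> x i}"

definition beta :: "(nat \<Rightarrow> 'a::order) \<Rightarrow> nat \<Rightarrow> 'a \<Rightarrow> nat" where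
  "beta x k m = Max {i. 1 \<le> i \<and> i \<le> k \<and> x (i - 1) \<le> m}"

definition gamma1 :: "(nat \<Rightarrow> 'a::lattice) \<Rightarrow> nat \<Rightarrow> 'a \<Rightarrow> 'a \<Rightarrow> nat" where
  "gamma1 x k b c = Min {delta x k j | j. join_irr j \<and> j \<le> c \<and> \<not> j \<le> b}"

definition gamma1' :: "(nat \<Rightarrow> 'a::lattice) \<Rightarrow> nat \<Rightarrow> 'a \<Rightarrow> 'a \<Rightarrow> nat" where
  "gamma1' x k b c = Max {i. 1 \<le> i \<and> i \<le> k \<and> inf c (x (i - 1)) \<le> b}"

definition gamma2 :: "(nat \<Rightarrow> 'a::lattice) \<Rightarrow> nat \<Rightarrow> 'a \<Rightarrow> 'a \<Rightarrow> nat" where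
  "gamma2 x k b c = Max {beta x k m | m. meet_irr m \<and> b \<le> m \<and> \<not> c \<le> m}"

definition gamma2' :: "(nat \<Rightarrow> 'a::lattice) \<Rightarrow> nat \<Rightarrow> 'a \<Rightarrow> 'a \<Rightarrow> nat" where
  "gamma2' x k b c = Min {i. i \<le> k \<and> c \<le> sup b (x i)}"

definition left_modular :: "'a::lattice \<Rightarrow> bool" where
  "left_modular a \<longleftrightarrow> (\<forall>b c. b < c \<longrightarrow> inf (sup b a) c = sup b (inf a c))"

end

theory Submission
  imports Defs
begin

lemma lower_cover_ex:
  fixes a b :: "'a::{finite,order}"
  assumes "a < b" shows "\<exists>c. a \<le> c \<and> covers c b"
proof -
  obtain m where m: "m \<in> {w. a \<le> w \<and> w < b}" "a \<le> m"
    "\<forall>w \<in> {w. a \<le> w \<and> w < b}. m \<le> w \<longrightarrow> m = w"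
    using finite_has_maximal2[of "{w. a \<le> w \<and> w < b}" a] assms by auto
  have "covers m b" unfolding covers_def
  proof (intro conjI notI)
    show "m < b" using m by auto
  next
    assume "\<exists>z. m < z \<and> z < b"
    then obtain z where "m < z" "z < b" by auto
    then show False using m(2,3) by (metis (mono_tags) mem_Collect_eq order.strict_iff_order order_trans)
  qed
  then show ?thesis using m by auto
qed

lemma upper_cover_ex:
  fixes a b :: "'a::{finite,order}"
  assumes "a < b" shows "\<exists>c. covers a c \<and> c \<le> b"
proof -
  obtain m where m: "m \<in> {w. a < w \<and> w \<le> b}" "m \<le> b"
    "\<forall>w \<in> {w. a < w \<and> w \<le> b}. w \<le> m \<longrightarrow> m = w"
    using finite_has_minimal2[of "{w. a < w \<and> w \<le> b}" b] assms by auto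
  have "covers a m" unfolding covers_def
  proof (intro conjI notI)
    show "a < m" using m by auto
  next
    assume "\<exists>z. a < z \<and> z < m"
    then obtain z where "a < z" "z < m" by auto
    then show False using m(2,3) by (metis (mono_tags) mem_Collect_eq order.strict_iff_order order_trans)
  qed
  then show ?thesis using m by auto
qed

lemma join_irr_ex:
  fixes y z :: "'a::{finite,lattice}"
  shows "\<not> y \<le> z \<Longrightarrow> \<exists>j. join_irr j \<and> j \<le> y \<and> \<not> j \<le> z"
proof (induction "card {v. v < y}" arbitrary: y rule: less_induct)
  case less
  show ?case
  proof (cases "join_irr y")
    case True thus ?thesis using less.prems by auto
  next
    case False
    have "inf y z < y" using less.prems by (metis inf.absorb_iff1 inf.cobounded2 inf_le1 order.not_eq_order_implies_strict)
    then obtain u where u: "covers u y" using lower_cover_ex by blast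
    then obtain v where v: "covers v y" "v \<noteq> u" using False unfolding join_irr_def by blast
    have uy: "u < y" and vy: "v < y" using u v unfolding covers_def by auto
    have "sup u v = y"
    proof (rule ccontr)
      assume ne: "sup u v \<noteq> y"
      have "sup u v \<le> y" using uy vy by (simp add: less_imp_le)
      hence lt: "sup u v < y" using ne by (auto simp: less_le)
      have "u = sup u v" using u lt unfolding covers_def
        by (metis sup.cobounded1 order.not_eq_order_implies_strict)
      hence "v < u" using v(2) by (metis sup.cobounded2 order.not_eq_order_implies_strict)
      thus False using v(1) uy unfolding covers_def by blast
    qed
    hence "\<not> u \<le> z \<or> \<not> v \<le> z" using less.prems by (metis sup.bounded_iff)
    then obtain w where w: "w < y" "\<not> w \<le> z" using uy vy by blast
    have "{v. v < w} \<subset> {v. v < y}" using w(1) by (auto intro: less_trans)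
    hence "card {v. v < w} < card {v. v < y}" by (simp add: psubset_card_mono)
    then obtain j where "join_irr j \<and> j \<le> w \<and> \<not> j \<le> z" using less.hyps w(2) by blast
    then show ?thesis using w(1) by (meson less_imp_le order_trans)
  qed
qed

lemma meet_irr_ex:
  fixes w z :: "'a::{finite,lattice}"
  shows "\<not> w \<le> z \<Longrightarrow> \<exists>m. meet_irr m \<and> z \<le> m \<and> \<not> w \<le> m"
proof (induction "card {v. z < v}" arbitrary: z rule: less_induct)
  case less
  show ?case
  proof (cases "meet_irr z")
    case True thus ?thesis using less.prems by auto
  next
    case False
    have "z < sup w z" using less.prems by (metis sup.absorb_iff2 sup.cobounded2 sup_ge1 order.not_eq_order_implies_strict)
    then obtain u where u: "covers z u" using upper_cover_ex by blast
    then obtain v where v: "covers z v" "v \<noteq> u" using False unfolding meet_irr_def by blast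
    have uy: "z < u" and vy: "z < v" using u v unfolding covers_def by auto
    have "inf u v = z"
    proof (rule ccontr)
      assume ne: "inf u v \<noteq> z"
      have "z \<le> inf u v" using uy vy by (simp add: less_imp_le)
      hence lt: "z < inf u v" using ne by (auto simp: less_le)
      have "u = inf u v" using u lt unfolding covers_def
        by (metis inf.cobounded1 order.not_eq_order_implies_strict)
      hence "u < v" using v(2) by (metis inf.cobounded2 order.not_eq_order_implies_strict)
      thus False using v(1) uy unfolding covers_def by blast
    qed
    hence "\<not> w \<le> u \<or> \<not> w \<le> v" using less.prems by (metis le_inf_iff)
    then obtain y where w: "z < y" "\<not> w \<le> y" using uy vy by blast
    have "{v. y < v} \<subset> {v. z < v}" using w(1) by (auto intro: less_trans)
    hence "card {v. y < v} < card {v. z < v}" by (simp add: psubset_card_mono)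
    then obtain m where "meet_irr m \<and> y \<le> m \<and> \<not> w \<le> m" using less.hyps w(2) by blast
    then show ?thesis using w(1) by (meson less_imp_le order_trans)
  qed
qed

context
  fixes x :: "nat \<Rightarrow> 'a::{finite, bounded_lattice}" and k :: nat
  assumes chain: "\<And>i. i < k \<Longrightarrow> x i < x (Suc i)"
    and bot: "x 0 = bot" and top: "x k = top"
begin

lemma xmono: "i \<le> j \<Longrightarrow> j \<le> k \<Longrightarrow> x i \<le> x j"
proof (induction j)
  case 0 thus ?case by simp
next
  case (Suc j)
  show ?case
  proof (cases "i = Suc j")
    case True thus ?thesis by simp
  next
    case False
    hence "x i \<le> x j" using Suc by simp
    also have "x j \<le> x (Suc j)" using chain[of j] Suc.prems by simp
    finally show ?thesis .
  qed
qed

lemma kpos: "covers (b::'a) c \<Longrightarrow> 0 < k"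
proof (rule ccontr)
  assume "covers b c" "\<not> 0 < k"
  hence "k = 0" by simp
  hence "(bot::'a) = top" using bot top by simp
  hence "\<And>y::'a. y = bot" by (metis bot_unique top_greatest)
  hence "b = bot" "c = bot" by blast+
  hence "b = c" by simp
  thus False using \<open>covers b c\<close> unfolding covers_def by simp
qed

lemma g1'_char:
  assumes cv: "covers b c"
  defines "g \<equiv> gamma1' x k b c"
  shows "1 \<le> g \<and> g \<le> k \<and> (\<forall>i\<le>k. inf c (x i) \<le> b \<longleftrightarrow> i < g)"
proof -
  define T where "T = {i. 1 \<le> i \<and> i \<le> k \<and> inf c (x (i - 1)) \<le> b}"
  have kp: "0 < k" using kpos cv by blast
  have fin: "finite T" unfolding T_def by (rule finite_subset[of _ "{..k}"]) auto
  have "1 \<in> T" unfolding T_def using kp bot by simp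
  hence gT: "g \<in> T" and ub: "\<And>i. i \<in> T \<Longrightarrow> i \<le> g"
    using fin unfolding g_def gamma1'_def T_def[symmetric] by (auto intro: Max_in)
  have bc: "b < c" using cv unfolding covers_def by simp
  have "\<forall>i\<le>k. inf c (x i) \<le> b \<longleftrightarrow> i < g"
  proof (intro allI impI iffI)
    fix i assume ik: "i \<le> k" and le: "inf c (x i) \<le> b"
    show "i < g"
    proof (rule ccontr)
      assume "\<not> i < g"
      show False
      proof (cases "i = k")
        case True thus False using le top bc by simp
      next
        case False
        hence "Suc i \<in> T" unfolding T_def using ik le by simp
        thus False using ub \<open>\<not> i < g\<close> by fastforce
      qed
    qed
  next
    fix i assume ik: "i \<le> k" and lt: "i < g"
    have "x i \<le> x (g - 1)" using lt gT unfolding T_def by (intro xmono) auto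
    hence "inf c (x i) \<le> inf c (x (g - 1))" by (simp add: inf.coboundedI2)
    also have "\<dots> \<le> b" using gT unfolding T_def by simp
    finally show "inf c (x i) \<le> b" .
  qed
  thus ?thesis using gT unfolding T_def by simp
qed

lemma g2'_char:
  assumes cv: "covers b c"
  defines "g \<equiv> gamma2' x k b c"
  shows "1 \<le> g \<and> g \<le> k \<and> (\<forall>i\<le>k. c \<le> sup b (x i) \<longleftrightarrow> g \<le> i)"
proof -
  define T where "T = {i. i \<le> k \<and> c \<le> sup b (x i)}"
  have fin: "finite T" unfolding T_def by (rule finite_subset[of _ "{..k}"]) auto
  have "k \<in> T" unfolding T_def using top by simp
  hence gT: "g \<in> T" and lb: "\<And>i. i \<in> T \<Longrightarrow> g \<le> i"
    using fin unfolding g_def gamma2'_def T_def[symmetric] by (auto intro: Min_in)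
  have bc: "b < c" using cv unfolding covers_def by simp
  have g1: "1 \<le> g"
  proof (rule ccontr)
    assume "\<not> 1 \<le> g" hence "g = 0" by simp
    thus False using gT bot bc unfolding T_def by (simp add: leD)
  qed
  have "\<forall>i\<le>k. c \<le> sup b (x i) \<longleftrightarrow> g \<le> i"
  proof (intro allI impI iffI)
    fix i assume "i \<le> k" "c \<le> sup b (x i)"
    thus "g \<le> i" using lb unfolding T_def by simp
  next
    fix i assume ik: "i \<le> k" and "g \<le> i"
    hence "x g \<le> x i" by (intro xmono)
    hence "sup b (x g) \<le> sup b (x i)" by (simp add: sup.coboundedI2)
    moreover have "c \<le> sup b (x g)" using gT unfolding T_def by simp
    ultimately show "c \<le> sup b (x i)" using order_trans by blast
  qed
  thus ?thesis using gT g1 unfolding T_def by simp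
qed

lemma delta_char:
  "delta x k j \<le> k \<and> j \<le> x (delta x k j) \<and> (\<forall>i\<le>k. j \<le> x i \<longrightarrow> delta x k j \<le> i)"
proof -
  define T where "T = {i. i \<le> k \<and> j \<le> x i}"
  have fin: "finite T" unfolding T_def by (rule finite_subset[of _ "{..k}"]) auto
  have "k \<in> T" unfolding T_def using top by simp
  hence "delta x k j \<in> T" and "\<And>i. i \<in> T \<Longrightarrow> delta x k j \<le> i"
    using fin unfolding delta_def T_def[symmetric] by (auto intro: Min_in)
  thus ?thesis unfolding T_def by auto
qed

lemma beta_char:
  assumes "0 < k"
  shows "1 \<le> beta x k m \<and> beta x k m \<le> k \<and> x (beta x k m - 1) \<le> m \<and>
     (\<forall>i. 1 \<le> i \<longrightarrow> i \<le> k \<longrightarrow> x (i - 1) \<le> m \<longrightarrow> i \<le> beta x k m)"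
proof -
  define T where "T = {i. 1 \<le> i \<and> i \<le> k \<and> x (i - 1) \<le> m}"
  have fin: "finite T" unfolding T_def by (rule finite_subset[of _ "{..k}"]) auto
  have "1 \<in> T" unfolding T_def using bot assms by simp
  hence "beta x k m \<in> T" and "\<And>i. i \<in> T \<Longrightarrow> i \<le> beta x k m"
    using fin unfolding beta_def T_def[symmetric] by (auto intro: Max_in)
  thus ?thesis unfolding T_def by auto
qed

lemma g1_eq:
  assumes cv: "covers b c"
  shows "gamma1 x k b c = gamma1' x k b c"
proof -
  let ?g = "gamma1' x k b c"
  have ch: "1 \<le> ?g" "?g \<le> k" "\<forall>i\<le>k. inf c (x i) \<le> b \<longleftrightarrow> i < ?g"
    using g1'_char[OF cv] by auto
  let ?J = "{delta x k j | j. join_irr j \<and> j \<le> c \<and> \<not> j \<le> b}"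
  have fin: "finite ?J" by simp
  have lb: "?g \<le> y" if yJ: "y \<in> ?J" for y
  proof -
    obtain j where j: "y = delta x k j" "j \<le> c" "\<not> j \<le> b" using yJ by blast
    have d: "delta x k j \<le> k" "j \<le> x (delta x k j)" using delta_char by auto
    have "\<not> inf c (x (delta x k j)) \<le> b" using j d by (meson le_inf_iff order_trans)
    thus ?thesis using ch(3) d(1) j(1) by auto
  qed
  have "\<not> inf c (x ?g) \<le> b" using ch by simp
  then obtain j where j: "join_irr j" "j \<le> inf c (x ?g)" "\<not> j \<le> b"
    using join_irr_ex by blast
  have jJ: "delta x k j \<in> ?J" using j by auto
  have "delta x k j \<le> ?g" using delta_char j(2) ch(2) by auto
  hence "delta x k j = ?g" using lb[OF jJ] by simp
  hence "?g \<in> ?J" using jJ by simp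
  thus ?thesis unfolding gamma1_def using Min_eqI[OF fin lb] by blast
qed

lemma g2_eq:
  assumes cv: "covers b c"
  shows "gamma2 x k b c = gamma2' x k b c"
proof -
  let ?g = "gamma2' x k b c"
  have kp: "0 < k" using kpos cv by blast
  have ch: "1 \<le> ?g" "?g \<le> k" "\<forall>i\<le>k. c \<le> sup b (x i) \<longleftrightarrow> ?g \<le> i"
    using g2'_char[OF cv] by auto
  let ?M = "{beta x k m | m. meet_irr m \<and> b \<le> m \<and> \<not> c \<le> m}"
  have fin: "finite ?M" by simp
  have ub: "y \<le> ?g" if yM: "y \<in> ?M" for y
  proof -
    obtain m where m: "y = beta x k m" "b \<le> m" "\<not> c \<le> m" using yM by blast
    have d: "1 \<le> beta x k m" "beta x k m \<le> k" "x (beta x k m - 1) \<le> m" using beta_char[OF kp] by auto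
    have "\<not> c \<le> sup b (x (beta x k m - 1))" using m d by (meson le_sup_iff order_trans)
    hence "\<not> ?g \<le> beta x k m - 1" using ch(3) d(2) by auto
    thus ?thesis using m(1) d(1) by simp
  qed
  have "\<not> c \<le> sup b (x (?g - 1))" using ch by simp
  then obtain m where m: "meet_irr m" "sup b (x (?g - 1)) \<le> m" "\<not> c \<le> m"
    using meet_irr_ex by blast
  have mM: "beta x k m \<in> ?M" using m by auto
  have "?g \<le> beta x k m" using beta_char[OF kp] m(2) ch(1,2) by auto
  hence "beta x k m = ?g" using ub[OF mM] by simp
  hence "?g \<in> ?M" using mM by simp
  thus ?thesis unfolding gamma2_def using Max_eqI[OF fin ub] by blast
qed

lemma g2'_le_g1':
  assumes cv: "covers b c"
  shows "gamma2' x k b c \<le> gamma1' x k b c"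
proof -
  let ?g = "gamma1' x k b c"
  have ch: "1 \<le> ?g" "?g \<le> k" "\<forall>i\<le>k. inf c (x i) \<le> b \<longleftrightarrow> i < ?g"
    using g1'_char[OF cv] by auto
  have n: "\<not> inf c (x ?g) \<le> b" using ch by simp
  have bc: "b < c" using cv unfolding covers_def by simp
  have le: "sup b (inf c (x ?g)) \<le> c" using bc by simp
  have "b \<noteq> sup b (inf c (x ?g))"
  proof
    assume "b = sup b (inf c (x ?g))"
    hence "inf c (x ?g) \<le> b" by (simp add: sup.absorb_iff1)
    thus False using n by simp
  qed
  hence "b < sup b (inf c (x ?g))" by (simp add: order.not_eq_order_implies_strict)
  hence "\<not> sup b (inf c (x ?g)) < c" using cv unfolding covers_def by blast
  hence "sup b (inf c (x ?g)) = c" using le by (simp add: less_le)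
  moreover have "sup b (inf c (x ?g)) \<le> sup b (x ?g)" by (intro sup_mono) auto
  ultimately have "c \<le> sup b (x ?g)" by simp
  thus ?thesis using g2'_char[OF cv] ch(2) by auto
qed

end

theorem theorem3p3:
  fixes x :: "nat \<Rightarrow> 'a::{finite, bounded_lattice}" and k :: nat
  assumes chain: "\<And>i. i < k \<Longrightarrow> x i < x (Suc i)"
    and bot: "x 0 = bot" and top: "x k = top"
  shows "(\<forall>b c. covers b c \<longrightarrow>
            gamma2 x k b c = gamma2' x k b c \<and>
            gamma2' x k b c \<le> gamma1 x k b c \<and>
            gamma1 x k b c = gamma1' x k b c)
         \<and> ((\<forall>b c. covers b c \<longrightarrow> gamma1' x k b c = gamma2' x k b c)
              \<longleftrightarrow> (\<forall>i\<le>k. left_modular (x i)))"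
proof (intro conjI iffI allI impI)
  fix b c :: 'a assume cv: "covers b c"
  show "gamma2 x k b c = gamma2' x k b c" using g2_eq[OF assms cv] .
  show "gamma1 x k b c = gamma1' x k b c" using g1_eq[OF assms cv] .
  show "gamma2' x k b c \<le> gamma1 x k b c"
    using g1_eq[OF assms cv] g2'_le_g1'[OF assms cv] by simp
next
  fix b c :: 'a assume lm: "\<forall>i\<le>k. left_modular (x i)" and cv: "covers b c"
  let ?g = "gamma2' x k b c"
  have c2: "1 \<le> ?g" "?g \<le> k" "\<forall>i\<le>k. c \<le> sup b (x i) \<longleftrightarrow> ?g \<le> i"
    using g2'_char[OF assms cv] by auto
  have c1: "\<forall>i\<le>k. inf c (x i) \<le> b \<longleftrightarrow> i < gamma1' x k b c"
    using g1'_char[OF assms cv] by auto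
  have bc: "b < c" using cv unfolding covers_def by simp
  have "inf (sup b (x ?g)) c = sup b (inf (x ?g) c)"
    using lm c2(2) bc unfolding left_modular_def by blast
  moreover have "inf (sup b (x ?g)) c = c" using c2 by (simp add: inf.absorb2)
  ultimately have eqc: "sup b (inf (x ?g) c) = c" by simp
  have "\<not> inf c (x ?g) \<le> b"
  proof
    assume h: "inf c (x ?g) \<le> b"
    hence "sup b (inf (x ?g) c) = b" by (simp add: inf.commute sup.absorb1)
    thus False using eqc bc by simp
  qed
  hence "gamma1' x k b c \<le> ?g" using c1 c2(2) by auto
  thus "gamma1' x k b c = ?g" using g2'_le_g1'[OF assms cv] by simp
next
  fix i assume eq: "\<forall>b c. covers b c \<longrightarrow> gamma1' x k b c = gamma2' x k b c" and ik: "i \<le> k"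
  show "left_modular (x i)" unfolding left_modular_def
  proof (intro allI impI)
    fix b c :: 'a assume bc: "b < c"
    let ?a = "x i"
    let ?y = "sup b (inf ?a c)" and ?z = "inf (sup b ?a) c"
    have yz: "?y \<le> ?z" using bc by (simp add: le_supI1 less_imp_le inf.coboundedI1)
    show "?z = ?y"
    proof (rule ccontr)
      assume "?z \<noteq> ?y"
      hence "?y \<noteq> ?z" by (rule not_sym)
      hence "?y < ?z" using yz by (rule order.not_eq_order_implies_strict)
      then obtain w where w: "covers ?y w" "w \<le> ?z" using upper_cover_ex by blast
      have z1: "?z \<le> sup b ?a" by simp
      have z2: "sup b ?a \<le> sup ?y ?a" by (simp add: le_supI1)
      have "w \<le> sup ?y ?a" using w(2) z1 z2 by (blast intro: order_trans)
      hence "w \<le> sup ?y (x i)" by simp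
      hence l2: "gamma2' x k ?y w \<le> i" using g2'_char[OF assms w(1)] ik by auto
      have i1: "inf w ?a \<le> inf ?z ?a" by (rule inf_mono[OF w(2) order_refl])
      have i2: "inf ?z ?a \<le> inf ?a c" by (simp add: le_infI1 le_infI2)
      have i3: "inf ?a c \<le> ?y" by simp
      have "inf w ?a \<le> ?y" using i1 i2 i3 by (blast intro: order_trans)
      hence l1: "i < gamma1' x k ?y w" using g1'_char[OF assms w(1)] ik by auto
      show False using l1 l2 eq w(1) by fastforce
    qed
  qed
qed

end
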